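(* Let $(C,\mathfrak p,\mathfrak d)$ be a regular $q$-cycle coalgebra. Then $\mathfrak p_{11}^1=\mathfrak d_{11}^1$.
   Context: $K$ is an algebraically closed field of characteristic $0$ and $n\ge2$. $C$ is the coalgebra dual to $K[y]/\langle y^n\rangle$: basis $x_0,\dots,x_{n-1}$, $\Delta(x_i)=\sum_{j+k=i}x_j\otimes x_k$, $\epsilon(x_i)=\delta_{i0}$; $C\otimes C$ has the tensor product coalgebra structure; Sweedler notation $\Delta(b)=b_{(1)}\otimes b_{(2)}$. For linear maps $\mathfrak p,\mathfrak d\colon C\otimes C\to C$ write $a\cdot b=\mathfrak p(a\otimes b)$, $a:b=\mathfrak d(a\otimes b)$, $\mathfrak p(x_i\otimes x_j)=\sum_{k=0}^{n-1}\mathfrak p_{ij}^kx_k$, $\mathfrak d(x_i\otimes x_j)=\sum_{k=0}^{n-1}\mathfrak d_{ij}^kx_k$. A triple $(C,\mathfrak p,\mathfrak d)$ with $\mathfrak p,\mathfrak d$ coalgebra morphisms is a regular $q$-magma coalgebra if there are coalgebra morphisms $a\otimes b\mapsto a^b$, $a\otimes b\mapsto a_b$ from $C\otimes C$ to $C$ with $a^{b_{(1)}}\cdot b_{(2)}=(a\cdot b_{(1)})^{b_{(2)}}=\epsilon(b)a$ and $(a:b_{(2)})_{b_{(1)}}=a_{b_{(2)}}:b_{(1)}=\epsilon(b)a$. It is a regular $q$-cycle coalgebra if moreover for all $a,b,c$: (1) $(a\cdot b_{(1)})\cdot(c:b_{(2)})=(a\cdot c_{(2)})\cdot(b\cdot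 c_{(1)})$; (2) $(a\cdot b_{(1)}):(c\cdot b_{(2)})=(a:c_{(2)})\cdot(b:c_{(1)})$; (3) $(a:b_{(1)}):(c:b_{(2)})=(a:c_{(2)}):(b\cdot c_{(1)})$. *)

theory Defs
  imports "HOL-Computational_Algebra.Polynomial"
begin

definition alg_closed :: "'k::field itself \<Rightarrow> bool" where
  "alg_closed _ \<longleftrightarrow> (\<forall>p :: 'k poly. degree p > 0 \<longrightarrow> (\<exists>x. poly p x = 0))"

text \<open>Elements of C = span(x_0,...,x_{n-1}) are coefficient vectors nat => 'k
  vanishing at indices >= n. A linear map C (x) C -> C is given by its structure
  constants f i j k = coefficient of x_k in f(x_i (x) x_j).\<close>

type_synonym 'k cvec = "nat \<Rightarrow> 'k"
type_synonym 'k bimap = "nat \<Rightarrow> nat \<Rightarrow> nat \<Rightarrow> 'k"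

definition inC :: "nat \<Rightarrow> 'k::field cvec \<Rightarrow> bool" where
  "inC n a \<longleftrightarrow> (\<forall>k\<ge>n. a k = 0)"

definition bas :: "nat \<Rightarrow> 'k::field cvec" where
  "bas i = (\<lambda>k. if k = i then 1 else 0)"

definition bapp :: "nat \<Rightarrow> 'k::field bimap \<Rightarrow> 'k cvec \<Rightarrow> 'k cvec \<Rightarrow> 'k cvec" where
  "bapp n f a b = (\<lambda>k. if k < n then (\<Sum>i<n. \<Sum>j<n. a i * b j * f i j k) else 0)"

definition ceps :: "'k::field cvec \<Rightarrow> 'k" where
  "ceps b = b 0"

text \<open>Sweedler sum: for F bilinear, F(b_(1), b_(2)) where
  Delta(x_j) = sum_{j1+j2=j} x_j1 (x) x_j2.\<close>
definition sweedler :: "nat \<Rightarrow> 'k::field cvec \<Rightarrow> ('k cvec \<Rightarrow> 'k cvec \<Rightarrow> 'k cvec) \<Rightarrow> 'k cvec" where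
  "sweedler n b F = (\<lambda>k. \<Sum>j<n. \<Sum>j1\<le>j. b j * F (bas j1) (bas (j - j1)) k)"

text \<open>f : C (x) C -> C is a coalgebra morphism (C (x) C with tensor product coalgebra
  structure), checked on the basis x_i (x) x_j:
  Delta(f(x_i (x) x_j)) = sum_{i1+i2=i, j1+j2=j} f(x_i1 (x) x_j1) (x) f(x_i2 (x) x_j2),
  epsilon(f(x_i (x) x_j)) = delta_{i0} delta_{j0}.\<close>
definition coalg_morph :: "nat \<Rightarrow> 'k::field bimap \<Rightarrow> bool" where
  "coalg_morph n f \<longleftrightarrow>
     (\<forall>i<n. \<forall>j<n. \<forall>k1<n. \<forall>k2<n.
        (if k1 + k2 < n then f i j (k1 + k2) else 0) =
        (\<Sum>i1\<le>i. \<Sum>j1\<le>j. f i1 j1 k1 * f (i - i1) (j - j1) k2)) \<and>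
     (\<forall>i<n. \<forall>j<n. f i j 0 = (if i = 0 \<and> j = 0 then 1 else 0))"

definition regular_q_magma :: "nat \<Rightarrow> 'k::field bimap \<Rightarrow> 'k bimap \<Rightarrow> bool" where
  "regular_q_magma n p d \<longleftrightarrow> coalg_morph n p \<and> coalg_morph n d \<and>
     (\<exists>up lo. coalg_morph n up \<and> coalg_morph n lo \<and>
        (\<forall>a b. inC n a \<longrightarrow> inC n b \<longrightarrow>
           sweedler n b (\<lambda>b1 b2. bapp n p (bapp n up a b1) b2) = (\<lambda>k. ceps b * a k) \<and>
           sweedler n b (\<lambda>b1 b2. bapp n up (bapp n p a b1) b2) = (\<lambda>k. ceps b * a k) \<and>
           sweedler n b (\<lambda>b1 b2. bapp n lo (bapp n d a b2) b1) = (\<lambda>k. ceps b * a k) \<and>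
           sweedler n b (\<lambda>b1 b2. bapp n d (bapp n lo a b2) b1) = (\<lambda>k. ceps b * a k)))"

definition regular_q_cycle :: "nat \<Rightarrow> 'k::field bimap \<Rightarrow> 'k bimap \<Rightarrow> bool" where
  "regular_q_cycle n p d \<longleftrightarrow> regular_q_magma n p d \<and>
     (\<forall>a b c. inC n a \<longrightarrow> inC n b \<longrightarrow> inC n c \<longrightarrow>
        sweedler n b (\<lambda>b1 b2. bapp n p (bapp n p a b1) (bapp n d c b2)) =
        sweedler n c (\<lambda>c1 c2. bapp n p (bapp n p a c2) (bapp n p b c1)) \<and>
        sweedler n b (\<lambda>b1 b2. bapp n d (bapp n p a b1) (bapp n p c b2)) =
        sweedler n c (\<lambda>c1 c2. bapp n p (bapp n d a c2) (bapp n d b c1)) \<and>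
        sweedler n b (\<lambda>b1 b2. bapp n d (bapp n d a b1) (bapp n d c b2)) =
        sweedler n c (\<lambda>c1 c2. bapp n d (bapp n d a c2) (bapp n p b c1)))"

end

theory Submission
  imports Defs
begin

lemma cm_mult:
  assumes "coalg_morph n f" "i<n" "j<n" "k1<n" "k2<n"
  shows "(if k1+k2<n then f i j (k1+k2) else 0) = (\<Sum>i1\<le>i. \<Sum>j1\<le>j. f i1 j1 k1 * f (i-i1) (j-j1) k2)"
  using assms unfolding coalg_morph_def by blast

lemma cm_zero:
  assumes "coalg_morph n f" "i<n" "j<n"
  shows "f i j 0 = (if i=0 \<and> j=0 then 1 else 0)"
  using assms unfolding coalg_morph_def by blast

lemma f001:
  fixes f :: "'k::field bimap"
  assumes cm: "coalg_morph n f" and n2: "2\<le>n"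
  shows "f 0 0 1 = 0"
proof -
  have pw: "k<n \<Longrightarrow> f 0 0 k = (f 0 0 1)^k" for k
  proof (induction k)
    case 0 show ?case using cm_zero[OF cm, of 0 0] n2 by simp
  next
    case (Suc k)
    have "(if 1+k<n then f 0 0 (1+k) else 0) = (\<Sum>i1\<le>0. \<Sum>j1\<le>0. f i1 j1 1 * f (0-i1) (0-j1) k)"
      by (rule cm_mult[OF cm]) (use Suc n2 in auto)
    then have "f 0 0 (Suc k) = f 0 0 1 * f 0 0 k" using Suc.prems by simp
    then show ?case using Suc by simp
  qed
  have "(if 1+(n-1)<n then f 0 0 (1+(n-1)) else 0) = (\<Sum>i1\<le>0. \<Sum>j1\<le>0. f i1 j1 1 * f (0-i1) (0-j1) (n-1))"
    by (rule cm_mult[OF cm]) (use n2 in auto)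
  then have "0 = f 0 0 1 * f 0 0 (n-1)" using n2 by simp
  also have "\<dots> = (f 0 0 1)^(Suc (n-1))"
  proof -
    have "n-1<n" using n2 by simp
    from pw[OF this] show ?thesis by (simp only: power_Suc)
  qed
  finally show ?thesis by auto
qed

lemma vanish:
  fixes f :: "'k::field bimap"
  assumes cm: "coalg_morph n f" and n2: "2\<le>n"
  shows "k<n \<Longrightarrow> i<n \<Longrightarrow> j<n \<Longrightarrow> i+j<k \<Longrightarrow> f i j k = 0"
proof (induction k arbitrary: i j)
  case 0 thus ?case by simp
next
  case (Suc k)
  have eq: "(if 1+k<n then f i j (1+k) else 0) = (\<Sum>i1\<le>i. \<Sum>j1\<le>j. f i1 j1 1 * f (i-i1) (j-j1) k)"
    by (rule cm_mult[OF cm]) (use Suc.prems n2 in auto)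
  have "(\<Sum>i1\<le>i. \<Sum>j1\<le>j. f i1 j1 1 * f (i-i1) (j-j1) k) = 0"
  proof (intro sum.neutral ballI)
    fix i1 j1 assume h: "i1 \<in> {..i}" "j1 \<in> {..j}"
    show "f i1 j1 1 * f (i-i1) (j-j1) k = 0"
    proof cases
      assume "i1=0 \<and> j1=0" thus ?thesis using f001[OF cm n2] by simp
    next
      assume "\<not>(i1=0 \<and> j1=0)"
      then have "(i-i1)+(j-j1) < k" using Suc.prems h by auto
      thus ?thesis using Suc.IH[of "i-i1" "j-j1"] Suc.prems by simp
    qed
  qed
  then show ?case using eq Suc.prems by simp
qed

lemma alpha_pow:
  fixes f :: "'k::field bimap"
  assumes cm: "coalg_morph n f" and n2: "2\<le>n"
  shows "k<n \<Longrightarrow> f k 0 k = (f 1 0 1)^k"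
proof (induction k)
  case 0 show ?case using cm_zero[OF cm, of 0 0] n2 by simp
next
  case (Suc k)
  have eq: "(if 1+k<n then f (Suc k) 0 (1+k) else 0) = (\<Sum>i1\<le>Suc k. \<Sum>j1\<le>0. f i1 j1 1 * f (Suc k-i1) (0-j1) k)"
    by (rule cm_mult[OF cm]) (use Suc.prems n2 in auto)
  have "(\<Sum>i1\<le>Suc k. \<Sum>j1\<le>0. f i1 j1 1 * f (Suc k-i1) (0-j1) k)
      = (\<Sum>i1\<le>Suc k. if i1 = 1 then f 1 0 1 * f k 0 k else 0)"
  proof (rule sum.cong)
    fix i1 assume h: "i1 \<in> {..Suc k}"
    consider "i1 = 0" | "i1 = 1" | "i1 \<ge> 2" by linarith
    then show "(\<Sum>j1\<le>0. f i1 j1 1 * f (Suc k-i1) (0-j1) k) = (if i1 = 1 then f 1 0 1 * f k 0 k else 0)"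
    proof cases
      case 1 then show ?thesis using f001[OF cm n2] by simp
    next
      case 2 then show ?thesis by simp
    next
      case 3 then show ?thesis using vanish[OF cm n2, of k "Suc k - i1" 0] Suc.prems h by simp
    qed
  qed simp
  then show ?case using eq Suc cm_zero[OF cm, of 0 0] n2 by simp
qed

lemma step:
  fixes f :: "'k::field bimap"
  assumes cm: "coalg_morph n f" and n2: "2\<le>n" and kn: "Suc k < n"
  shows "(\<Sum>i1\<le>Suc k. \<Sum>j1\<le>1. f i1 j1 1 * f (Suc k - i1) (1-j1) (Suc k))
       = f 1 0 1 * f k 1 (Suc k) + f 0 1 1 * f (Suc k) 0 (Suc k)"
proof -
  have "(\<Sum>i1\<le>Suc k. \<Sum>j1\<le>1. f i1 j1 1 * f (Suc k - i1) (1-j1) (Suc k))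
      = (\<Sum>i1\<le>Suc k. (if i1 = 1 then f 1 0 1 * f k 1 (Suc k) else 0)
                        + (if i1 = 0 then f 0 1 1 * f (Suc k) 0 (Suc k) else 0))"
  proof (rule sum.cong)
    fix i1 assume h: "i1 \<in> {..Suc k}"
    have e: "{..1::nat} = {0,1}" by auto
    consider "i1 = 0" | "i1 = 1" | "i1 \<ge> 2" by linarith
    then show "(\<Sum>j1\<le>1. f i1 j1 1 * f (Suc k - i1) (1-j1) (Suc k)) =
       (if i1 = 1 then f 1 0 1 * f k 1 (Suc k) else 0)
                        + (if i1 = 0 then f 0 1 1 * f (Suc k) 0 (Suc k) else 0)"
    proof cases
      case 1 then show ?thesis using f001[OF cm n2] by (simp add: e)
    next
      case 2 then show ?thesis using vanish[OF cm n2, of "Suc k" k 0] kn by (simp add: e)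
    next
      case 3 then show ?thesis using vanish[OF cm n2, of "Suc k" "Suc k - i1" 0]
          vanish[OF cm n2, of "Suc k" "Suc k - i1" 1] kn h by (simp add: e)
    qed
  qed simp
  then show ?thesis by (simp add: sum.distrib)
qed

lemma beta_pow:
  fixes f :: "'k::field bimap"
  assumes cm: "coalg_morph n f" and n2: "2\<le>n"
  shows "Suc k<n \<Longrightarrow> f k 1 (Suc k) = of_nat (Suc k) * (f 1 0 1)^k * f 0 1 1"
proof (induction k)
  case 0 show ?case by simp
next
  case (Suc k)
  have eq: "(if 1+Suc k<n then f (Suc k) 1 (1+Suc k) else 0) = (\<Sum>i1\<le>Suc k. \<Sum>j1\<le>1. f i1 j1 1 * f (Suc k-i1) (1-j1) (Suc k))"
    by (rule cm_mult[OF cm]) (use Suc.prems n2 in auto)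
  have "f (Suc k) 1 (Suc (Suc k)) = f 1 0 1 * f k 1 (Suc k) + f 0 1 1 * f (Suc k) 0 (Suc k)"
    using eq step[OF cm n2, of k] Suc.prems by simp
  also have "\<dots> = f 1 0 1 * (of_nat (Suc k) * (f 1 0 1)^k * f 0 1 1) + f 0 1 1 * (f 1 0 1)^(Suc k)"
    using Suc alpha_pow[OF cm n2, of "Suc k"] by simp
  also have "\<dots> = of_nat (Suc (Suc k)) * (f 1 0 1)^(Suc k) * f 0 1 1"
    by (simp add: algebra_simps)
  finally show ?case .
qed

lemma beta_zero:
  fixes f :: "'k::field_char_0 bimap"
  assumes cm: "coalg_morph n f" and n2: "2\<le>n" and a: "f 1 0 1 \<noteq> 0"
  shows "f 0 1 1 = 0"
proof -
  obtain m where m: "n = Suc (Suc m)" using n2 by (metis add_2_eq_Suc le_Suc_ex)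
  have eq: "(if 1+Suc m<n then f (Suc m) 1 (1+Suc m) else 0) = (\<Sum>i1\<le>Suc m. \<Sum>j1\<le>1. f i1 j1 1 * f (Suc m-i1) (1-j1) (Suc m))"
    by (rule cm_mult[OF cm]) (use m in auto)
  have "0 = f 1 0 1 * f m 1 (Suc m) + f 0 1 1 * f (Suc m) 0 (Suc m)"
    using eq step[OF cm n2, of m] m by simp
  also have "\<dots> = f 1 0 1 * (of_nat (Suc m) * (f 1 0 1)^m * f 0 1 1) + f 0 1 1 * (f 1 0 1)^(Suc m)"
    using beta_pow[OF cm n2, of m] alpha_pow[OF cm n2, of "Suc m"] m by simp
  also have "\<dots> = of_nat (Suc (Suc m)) * (f 1 0 1)^(Suc m) * f 0 1 1"
    by (simp add: algebra_simps)
  finally show ?thesis using a by (simp del: of_nat_Suc)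
qed

lemma small_vanish:
  fixes f :: "'k::field_char_0 bimap"
  assumes cm: "coalg_morph n f" and n2: "2\<le>n" and b: "f 0 1 1 = 0"
    and ij: "i\<le>1" "j\<le>1" and u: "2\<le>u" "u<n"
  shows "f i j u = 0"
proof cases
  assume "i+j<u" thus ?thesis using vanish[OF cm n2, of u i j] ij u by simp
next
  assume "\<not> i+j<u"
  then have ij1: "i=1" "j=1" "u=2" using ij u by auto
  have eq: "(if 1+1<n then f 1 1 (1+1) else 0) = (\<Sum>i1\<le>1. \<Sum>j1\<le>1. f i1 j1 1 * f (1-i1) (1-j1) 1)"
    by (rule cm_mult[OF cm]) (use u ij1 in auto)
  have e: "{..1::nat} = {0,1}" by auto
  show ?thesis using eq u ij1 b f001[OF cm n2] by (simp add: e numeral_2_eq_2)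
qed

lemma sum_two:
  fixes g :: "nat \<Rightarrow> 'k::field"
  assumes "2\<le>n" "\<And>u. 2\<le>u \<Longrightarrow> u<n \<Longrightarrow> g u = 0"
  shows "(\<Sum>u<n. g u) = g 0 + g 1"
proof -
  have "(\<Sum>u<n. g u) = (\<Sum>u\<in>{0,1}. g u)"
    by (rule sum.mono_neutral_right) (use assms in auto)
  thus ?thesis by simp
qed

lemma ssum:
  fixes y :: "nat \<Rightarrow> 'k::field"
  assumes "j<n" shows "(\<Sum>b<n. bas j b * y b) = y j"
proof -
  have "(\<Sum>b<n. bas j b * y b) = (\<Sum>b<n. if b = j then y b else 0)"
    by (rule sum.cong) (simp_all add: bas_def)
  thus ?thesis using assms by (simp add: sum.delta)
qed

lemma dsum:
  fixes x :: "nat \<Rightarrow> nat \<Rightarrow> 'k::field"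
  assumes "i<n" "j<n" shows "(\<Sum>a<n. \<Sum>b<n. bas i a * bas j b * x a b) = x i j"
proof -
  have "(\<Sum>a<n. \<Sum>b<n. bas i a * bas j b * x a b) = (\<Sum>a<n. bas i a * x a j)"
  proof (rule sum.cong)
    fix a show "(\<Sum>b<n. bas i a * bas j b * x a b) = bas i a * x a j"
      using ssum[OF assms(2), of "\<lambda>b. x a b"] by (simp add: sum_distrib_left[symmetric] mult.assoc)
  qed simp
  thus ?thesis using ssum[OF assms(1)] by simp
qed

lemma bapp_eval: "k<n \<Longrightarrow> bapp n f v w k = (\<Sum>i<n. \<Sum>j<n. v i * w j * f i j k)"
  by (simp add: bapp_def)

lemma bapp_bas:
  fixes g :: "'k::field bimap"
  assumes "i<n" "j<n"
  shows "bapp n g (bas i) (bas j) u = (if u<n then g i j u else 0)"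
  using assms dsum[OF assms, of "\<lambda>a b. g a b u"] by (simp add: bapp_def)

lemma compA:
  fixes f g h :: "'k::field bimap"
  assumes n2: "2\<le>n" and idx: "i<n" "j<n" "l<n" "m<n" "k<n"
    and vg: "\<And>u. 2\<le>u \<Longrightarrow> u<n \<Longrightarrow> g i j u = 0"
    and vh: "\<And>u. 2\<le>u \<Longrightarrow> u<n \<Longrightarrow> h l m u = 0"
  shows "bapp n f (bapp n g (bas i) (bas j)) (bapp n h (bas l) (bas m)) k =
     g i j 0 * h l m 0 * f 0 0 k + g i j 0 * h l m 1 * f 0 1 k +
     g i j 1 * h l m 0 * f 1 0 k + g i j 1 * h l m 1 * f 1 1 k"
proof -
  have "bapp n f (bapp n g (bas i) (bas j)) (bapp n h (bas l) (bas m)) k =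
     (\<Sum>u<n. \<Sum>v<n. g i j u * h l m v * f u v k)"
    using idx by (simp add: bapp_eval[of k n f] bapp_bas)
  also have "\<dots> = (\<Sum>v<n. g i j 0 * h l m v * f 0 v k) + (\<Sum>v<n. g i j 1 * h l m v * f 1 v k)"
    by (rule sum_two) (use n2 vg in auto)
  also have "(\<Sum>v<n. g i j 0 * h l m v * f 0 v k) = g i j 0 * h l m 0 * f 0 0 k + g i j 0 * h l m 1 * f 0 1 k"
    by (rule sum_two) (use n2 vh in auto)
  also have "(\<Sum>v<n. g i j 1 * h l m v * f 1 v k) = g i j 1 * h l m 0 * f 1 0 k + g i j 1 * h l m 1 * f 1 1 k"
    by (rule sum_two) (use n2 vh in auto)
  finally show ?thesis by (simp add: algebra_simps)
qed

lemma compB: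
  fixes f g :: "'k::field bimap"
  assumes n2: "2\<le>n" and idx: "i<n" "j<n" "m<n" "k<n"
    and vg: "\<And>u. 2\<le>u \<Longrightarrow> u<n \<Longrightarrow> g i j u = 0"
  shows "bapp n f (bapp n g (bas i) (bas j)) (bas m) k = g i j 0 * f 0 m k + g i j 1 * f 1 m k"
proof -
  have "bapp n f (bapp n g (bas i) (bas j)) (bas m) k = (\<Sum>u<n. \<Sum>v<n. bas m v * (g i j u * f u v k))"
    using idx by (simp add: bapp_eval[of k n f] bapp_bas algebra_simps)
  also have "\<dots> = (\<Sum>u<n. g i j u * f u m k)"
    by (intro sum.cong refl) (rule ssum[OF idx(3)])
  also have "\<dots> = g i j 0 * f 0 m k + g i j 1 * f 1 m k"
    by (rule sum_two) (use n2 vg in auto)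
  finally show ?thesis .
qed

lemma compA':
  fixes f g h :: "'k::field bimap"
  assumes n2: "2\<le>n"
    and vg: "\<forall>i j u. i\<le>1 \<longrightarrow> j\<le>1 \<longrightarrow> 2\<le>u \<longrightarrow> u<n \<longrightarrow> g i j u = 0"
    and vh: "\<forall>i j u. i\<le>1 \<longrightarrow> j\<le>1 \<longrightarrow> 2\<le>u \<longrightarrow> u<n \<longrightarrow> h i j u = 0"
    and idx: "i\<le>1" "j\<le>1" "l\<le>1" "m\<le>1" "k<n"
  shows "bapp n f (bapp n g (bas i) (bas j)) (bapp n h (bas l) (bas m)) k =
     g i j 0 * h l m 0 * f 0 0 k + g i j 0 * h l m 1 * f 0 1 k +
     g i j 1 * h l m 0 * f 1 0 k + g i j 1 * h l m 1 * f 1 1 k"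
  by (rule compA[OF n2]) (use idx n2 vg vh in auto)

lemma sweedler_bas:
  fixes F :: "'k::field cvec \<Rightarrow> 'k cvec \<Rightarrow> 'k cvec"
  assumes "j<n"
  shows "sweedler n (bas j) F k = (\<Sum>j1\<le>j. F (bas j1) (bas (j-j1)) k)"
proof -
  have "sweedler n (bas j) F k = (\<Sum>j'<n. bas j j' * (\<Sum>j1\<le>j'. F (bas j1) (bas (j'-j1)) k))"
    by (simp add: sweedler_def sum_distrib_left)
  also have "\<dots> = (\<Sum>j1\<le>j. F (bas j1) (bas (j-j1)) k)"
    by (rule ssum[OF assms])
  finally show ?thesis .
qed

lemma inC_bas: "i<n \<Longrightarrow> inC n (bas i)"
  by (simp add: inC_def bas_def)

theorem proposition2p3:
  fixes n :: nat and p d :: "'k::field_char_0 bimap"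
  assumes "alg_closed TYPE('k)"
    and "n \<ge> 2"
    and "regular_q_cycle n p d"
  shows "p 1 1 1 = d 1 1 1"
proof -
  have n2: "2 \<le> n" using assms(2) .
  have n1: "1 < n" "0 < n" using n2 by auto
  obtain up lo where cmp: "coalg_morph n p" and cmd: "coalg_morph n d"
    and cmu: "coalg_morph n up" and cml: "coalg_morph n lo"
    and mag: "\<And>a b. inC n a \<Longrightarrow> inC n b \<Longrightarrow>
           sweedler n b (\<lambda>b1 b2. bapp n p (bapp n up a b1) b2) = (\<lambda>k. ceps b * a k) \<and>
           sweedler n b (\<lambda>b1 b2. bapp n up (bapp n p a b1) b2) = (\<lambda>k. ceps b * a k) \<and>
           sweedler n b (\<lambda>b1 b2. bapp n lo (bapp n d a b2) b1) = (\<lambda>k. ceps b * a k) \<and>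
           sweedler n b (\<lambda>b1 b2. bapp n d (bapp n lo a b2) b1) = (\<lambda>k. ceps b * a k)"
    and cyc: "\<And>a b c. inC n a \<Longrightarrow> inC n b \<Longrightarrow> inC n c \<Longrightarrow>
        sweedler n b (\<lambda>b1 b2. bapp n p (bapp n p a b1) (bapp n d c b2)) =
        sweedler n c (\<lambda>c1 c2. bapp n p (bapp n p a c2) (bapp n p b c1)) \<and>
        sweedler n b (\<lambda>b1 b2. bapp n d (bapp n p a b1) (bapp n p c b2)) =
        sweedler n c (\<lambda>c1 c2. bapp n p (bapp n d a c2) (bapp n d b c1)) \<and>
        sweedler n b (\<lambda>b1 b2. bapp n d (bapp n d a b1) (bapp n d c b2)) =
        sweedler n c (\<lambda>c1 c2. bapp n d (bapp n d a c2) (bapp n p b c1))"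
    using assms(3) unfolding regular_q_cycle_def regular_q_magma_def by blast
  have i0: "inC n (bas 0)" and i1: "inC n (bas 1)" using inC_bas[of 0 n] inC_bas[of 1 n] n1 by auto
  have e0: "{..0::nat} = {0}" and e1: "{..1::nat} = {0,1}" by auto
  have bas11: "bas 1 1 = (1::'k)" and ceps0: "ceps (bas 0) = (1::'k)" by (simp_all add: bas_def ceps_def)
  have vu: "\<And>u. 2\<le>u \<Longrightarrow> u<n \<Longrightarrow> up 1 0 u = 0" using vanish[OF cmu n2] n1 by simp
  have vl: "\<And>u. 2\<le>u \<Longrightarrow> u<n \<Longrightarrow> lo 1 0 u = 0" using vanish[OF cml n2] n1 by simp
  have p001: "p 0 0 1 = 0" using f001[OF cmp n2] .
  have d001: "d 0 0 1 = 0" using f001[OF cmd n2] .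
  have "(1::'k) = ceps (bas 0) * bas 1 1" by (simp add: ceps_def bas_def)
  also have "\<dots> = sweedler n (bas 0) (\<lambda>b1 b2. bapp n p (bapp n up (bas 1) b1) b2) 1"
    using mag[OF i1 i0] by metis
  also have "\<dots> = bapp n p (bapp n up (bas 1) (bas 0)) (bas 0) 1"
    by (simp add: sweedler_bas[OF n1(2)] e0)
  also have "\<dots> = up 1 0 0 * p 0 0 1 + up 1 0 1 * p 1 0 1"
    by (rule compB[OF n2]) (use n1 vu in auto)
  also have "\<dots> = up 1 0 1 * p 1 0 1" using p001 by simp
  finally have "up 1 0 1 * p 1 0 1 = 1" by simp
  then have ap: "p 1 0 1 \<noteq> 0" by auto
  have "(1::'k) = ceps (bas 0) * bas 1 1" by (simp add: ceps_def bas_def)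
  also have "\<dots> = sweedler n (bas 0) (\<lambda>b1 b2. bapp n d (bapp n lo (bas 1) b2) b1) 1"
    using mag[OF i1 i0] by metis
  also have "\<dots> = bapp n d (bapp n lo (bas 1) (bas 0)) (bas 0) 1"
    by (simp add: sweedler_bas[OF n1(2)] e0)
  also have "\<dots> = lo 1 0 0 * d 0 0 1 + lo 1 0 1 * d 1 0 1"
    by (rule compB[OF n2]) (use n1 vl in auto)
  also have "\<dots> = lo 1 0 1 * d 1 0 1" using d001 by simp
  finally have "lo 1 0 1 * d 1 0 1 = 1" by simp
  then have ad: "d 1 0 1 \<noteq> 0" by auto
  have p011: "p 0 1 1 = 0" using beta_zero[OF cmp n2 ap] .
  have d011: "d 0 1 1 = 0" using beta_zero[OF cmd n2 ad] .
  have vp: "\<And>i j u. i\<le>1 \<Longrightarrow> j\<le>1 \<Longrightarrow> 2\<le>u \<Longrightarrow> u<n \<Longrightarrow> p i j u = 0"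
    using small_vanish[OF cmp n2 p011] by blast
  have vd: "\<And>i j u. i\<le>1 \<Longrightarrow> j\<le>1 \<Longrightarrow> 2\<le>u \<Longrightarrow> u<n \<Longrightarrow> d i j u = 0"
    using small_vanish[OF cmd n2 d011] by blast
  have z: "p 0 0 0 = 1" "p 1 0 0 = 0" "p 0 1 0 = 0" "p 1 1 0 = 0"
          "d 0 0 0 = 1" "d 1 0 0 = 0" "d 0 1 0 = 0" "d 1 1 0 = 0"
    using cm_zero[OF cmp] cm_zero[OF cmd] n1 by auto
  have VP: "\<forall>i j u. i\<le>1 \<longrightarrow> j\<le>1 \<longrightarrow> 2\<le>u \<longrightarrow> u<n \<longrightarrow> p i j u = 0" using vp by blast
  have VD: "\<forall>i j u. i\<le>1 \<longrightarrow> j\<le>1 \<longrightarrow> 2\<le>u \<longrightarrow> u<n \<longrightarrow> d i j u = 0" using vd by blast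
  note S = sweedler_bas e0 e1 compA'[OF n2 VP VP] compA'[OF n2 VP VD] compA'[OF n2 VD VD] compA'[OF n2 VD VP] z p001 d001 p011 d011 n1
  define a where "a = p 1 0 1"
  define g where "g = p 1 1 1"
  define a' where "a' = d 1 0 1"
  define g' where "g' = d 1 1 1"
  have E1: "a * g = g * a * a"
    using fun_cong[OF conjunct1[OF cyc[OF i1 i1 i0]], of 1] unfolding a_def g_def
    by (simp add: S[unfolded One_nat_def] One_nat_def algebra_simps)
  have E2: "g * a * a' = a * g"
    using fun_cong[OF conjunct1[OF cyc[OF i1 i0 i1]], of 1] unfolding a_def g_def a'_def
    by (simp add: S[unfolded One_nat_def] One_nat_def algebra_simps)
  have E3: "a' * g' = a' * a * g'"
    using fun_cong[OF conjunct2[OF conjunct2[OF cyc[OF i1 i1 i0]]], of 1] unfolding a_def g'_def a'_def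
    by (simp add: S[unfolded One_nat_def] One_nat_def algebra_simps)
  have E4: "g' * a' * a' = a' * g'"
    using fun_cong[OF conjunct2[OF conjunct2[OF cyc[OF i1 i0 i1]]], of 1] unfolding a_def g'_def a'_def
    by (simp add: S[unfolded One_nat_def] One_nat_def algebra_simps)
  have E5: "g * (a * g' + a' * g) = 2 * a * g * g"
    using fun_cong[OF conjunct1[OF cyc[OF i1 i1 i1]], of 1] unfolding a_def g_def a'_def g'_def
    by (simp add: S[unfolded One_nat_def] One_nat_def algebra_simps)
  have E6: "2 * a' * g' * g' = g' * (a' * g + a * g')"
    using fun_cong[OF conjunct2[OF conjunct2[OF cyc[OF i1 i1 i1]]], of 1] unfolding a_def g_def a'_def g'_def
    by (simp add: S[unfolded One_nat_def] One_nat_def algebra_simps)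
  have a0: "a \<noteq> 0" and a'0: "a' \<noteq> 0" using ap ad unfolding a_def a'_def by auto
  have h1: "g = 0 \<or> a = 1"
  proof -
    have "a * (g * (a - 1)) = 0" using E1 by (simp add: algebra_simps)
    thus ?thesis using a0 by auto
  qed
  have h2: "g = 0 \<or> a' = 1"
  proof -
    have "a * (g * (a' - 1)) = 0" using E2 by (simp add: algebra_simps)
    thus ?thesis using a0 by auto
  qed
  have h3: "g' = 0 \<or> a = 1"
  proof -
    have "a' * (g' * (a - 1)) = 0" using E3 by (simp add: algebra_simps)
    thus ?thesis using a'0 by auto
  qed
  have h4: "g' = 0 \<or> a' = 1"
  proof -
    have "a' * (g' * (a' - 1)) = 0" using E4 by (simp add: algebra_simps)
    thus ?thesis using a'0 by auto
  qed
  have "g = g'"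
  proof (cases "g = 0 \<and> g' = 0")
    case True thus ?thesis by simp
  next
    case False
    then have "a = 1" "a' = 1" using h1 h2 h3 h4 by auto
    then have "g * (g' - g) = 0" "g' * (g' - g) = 0" using E5 E6 by (simp_all add: algebra_simps)
    thus ?thesis by auto
  qed
  thus ?thesis unfolding g_def g'_def .
qed

end
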